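(* Let $G=(V,D,B)$ be a mixed graph, $v\in V$, and suppose $W\subseteq V$ satisfies the weak half-trek criterion with respect to $v$. Then there exists a set $Y\subseteq V$ satisfying the half-trek criterion with respect to $v$ such that $Y\cap\mathrm{htr}(v)=W\cap\mathrm{htr}(v)$.
   Context: A mixed graph is $G=(V,D,B)$ with $V=[m]$, $D\subseteq V\times V$ directed edges $v\to w$, $B$ symmetric set of bidirected edges $v\leftrightarrow w$, no self-loops. $\mathrm{pa}(v)=\{w:w\to v\in D\}$, $\mathrm{sib}(v)=\{w:w\leftrightarrow v\in B\}$. A path is a sequence of edges of $D\cup B$ connecting consecutive nodes (not necessarily simple; directed edges may be traversed either way). A trek from $v$ to $w$ is a path of the form $v=v^L_l\leftarrow\cdots\leftarrow v^L_0\leftrightarrow v^R_0\to\cdots\to v^R_r=w$ with $\mathrm{Left}=\{v^L_0,\dots,v^L_l\}$, $\mathrm{Right}=\{v^R_0,\dots,v^R_r\}$, or $v=v^L_l\leftarrow\cdots\leftarrow v^L_1\leftarrow v^T\to v^R_1\to\cdots\to v^R_r=w$ ($l,r\ge0$) with $\mathrm{Left}=\{v^T,v^L_1,\dots,v^L_l\}$, $\mathrm{Right}=\{v^T,v^R_1,\dots,v^R_r\}$. A half-trek is a trek with $|\mathrm{Left}|=1$. A system of treks from $X$ to $Y$ is a set of treks with distinct sources forming $X$ and distinct targets forming $Y$; it has no sided intersection if the Left sets are pairwise disjoint and the Right sets are pairwise disjoint. $\mathrm{htr}(v)$ is the set of $w\in V\setminus(\{v\}\cup\mathrm{sib}(v))$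 reachable from $v$ by a half-trek. $Y$ satisfies the half-trek criterion w.r.t. $v$ if (i) $|Y|=|\mathrm{pa}(v)|$, (ii) $Y\cap(\{v\}\cup\mathrm{sib}(v))=\emptyset$, (iii) there is a system of half-treks with no sided intersection from $Y$ to $\mathrm{pa}(v)$. $Y$ satisfies the weak half-trek criterion w.r.t. $v$ if (i) and (ii) hold and (iii') there is a system of treks with no sided intersection from $Y$ to $\mathrm{pa}(v)$ in which, for every $w\in Y\cap\mathrm{htr}(v)$, the trek with source $w$ is a half-trek. *)

theory Defs
  imports Main
begin

definition mixed_graph :: "nat \<Rightarrow> (nat \<times> nat) set \<Rightarrow> (nat \<times> nat) set \<Rightarrow> bool" where
  "mixed_graph m D B \<longleftrightarrow>
     D \<subseteq> {1..m} \<times> {1..m} \<and> B \<subseteq> {1..m} \<times> {1..m} \<and> sym B \<and>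
     (\<forall>x. (x, x) \<notin> D) \<and> (\<forall>x. (x, x) \<notin> B)"

definition pa :: "(nat \<times> nat) set \<Rightarrow> nat \<Rightarrow> nat set" where
  "pa D v = {w. (w, v) \<in> D}"

definition sib :: "(nat \<times> nat) set \<Rightarrow> nat \<Rightarrow> nat set" where
  "sib B v = {w. (w, v) \<in> B}"

definition dwalk :: "(nat \<times> nat) set \<Rightarrow> nat list \<Rightarrow> bool" where
  "dwalk D xs \<longleftrightarrow> xs \<noteq> [] \<and> (\<forall>i. Suc i < length xs \<longrightarrow> (xs ! i, xs ! Suc i) \<in> D)"

text \<open>A trek is encoded as (bidir, ls, rs).
  If bidir: ls = [vL0,...,vLl], rs = [vR0,...,vRr], with vL0 <-> vR0 in B and
  directed walks along ls and rs; the trek is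
  v = vLl <- ... <- vL0 <-> vR0 -> ... -> vRr = w.
  If not bidir: ls = [vT,vL1,...,vLl], rs = [vT,vR1,...,vRr], with directed walks
  along ls and rs (top node vT shared); the trek is
  v = vLl <- ... <- vL1 <- vT -> vR1 -> ... -> vRr = w.\<close>
type_synonym trek = "bool \<times> nat list \<times> nat list"

definition trek_left :: "trek \<Rightarrow> nat set" where
  "trek_left t = set (fst (snd t))"

definition trek_right :: "trek \<Rightarrow> nat set" where
  "trek_right t = set (snd (snd t))"

definition trek_source :: "trek \<Rightarrow> nat" where
  "trek_source t = last (fst (snd t))"

definition trek_target :: "trek \<Rightarrow> nat" where
  "trek_target t = last (snd (snd t))"

definition is_trek :: "nat \<Rightarrow> (nat \<times> nat) set \<Rightarrow> (nat \<times> nat) set \<Rightarrow> trek \<Rightarrow> bool" where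
  "is_trek m D B t \<longleftrightarrow>
     (case t of (bidir, ls, rs) \<Rightarrow>
        dwalk D ls \<and> dwalk D rs \<and> set ls \<subseteq> {1..m} \<and> set rs \<subseteq> {1..m} \<and>
        (if bidir then (hd ls, hd rs) \<in> B else hd ls = hd rs))"

definition is_half_trek :: "nat \<Rightarrow> (nat \<times> nat) set \<Rightarrow> (nat \<times> nat) set \<Rightarrow> trek \<Rightarrow> bool" where
  "is_half_trek m D B t \<longleftrightarrow> is_trek m D B t \<and> card (trek_left t) = 1"

definition system_of_treks :: "trek set \<Rightarrow> nat set \<Rightarrow> nat set \<Rightarrow> bool" where
  "system_of_treks T X Y \<longleftrightarrow>
     inj_on trek_source T \<and> trek_source ` T = X \<and>
     inj_on trek_target T \<and> trek_target ` T = Y"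

definition no_sided_intersection :: "trek set \<Rightarrow> bool" where
  "no_sided_intersection T \<longleftrightarrow>
     (\<forall>t\<in>T. \<forall>t'\<in>T. t \<noteq> t' \<longrightarrow>
        trek_left t \<inter> trek_left t' = {} \<and> trek_right t \<inter> trek_right t' = {})"

definition htr :: "nat \<Rightarrow> (nat \<times> nat) set \<Rightarrow> (nat \<times> nat) set \<Rightarrow> nat \<Rightarrow> nat set" where
  "htr m D B v = {w \<in> {1..m} - ({v} \<union> sib B v).
      \<exists>t. is_half_trek m D B t \<and> trek_source t = v \<and> trek_target t = w}"

definition HTC :: "nat \<Rightarrow> (nat \<times> nat) set \<Rightarrow> (nat \<times> nat) set \<Rightarrow> nat \<Rightarrow> nat set \<Rightarrow> bool" where
  "HTC m D B v Y \<longleftrightarrow>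
     card Y = card (pa D v) \<and> Y \<inter> ({v} \<union> sib B v) = {} \<and>
     (\<exists>T. (\<forall>t\<in>T. is_half_trek m D B t) \<and> system_of_treks T Y (pa D v) \<and>
          no_sided_intersection T)"

definition weak_HTC :: "nat \<Rightarrow> (nat \<times> nat) set \<Rightarrow> (nat \<times> nat) set \<Rightarrow> nat \<Rightarrow> nat set \<Rightarrow> bool" where
  "weak_HTC m D B v Y \<longleftrightarrow>
     card Y = card (pa D v) \<and> Y \<inter> ({v} \<union> sib B v) = {} \<and>
     (\<exists>T. (\<forall>t\<in>T. is_trek m D B t) \<and> system_of_treks T Y (pa D v) \<and>
          no_sided_intersection T \<and>
          (\<forall>t\<in>T. trek_source t \<in> htr m D B v \<longrightarrow> is_half_trek m D B t))"

end

theory Submission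
  imports Defs
begin

lemma dwalk_Cons:
  "dwalk D (x # xs) \<longleftrightarrow> (xs = [] \<or> ((x, hd xs) \<in> D \<and> dwalk D xs))"
proof
  assume a: "dwalk D (x # xs)"
  show "xs = [] \<or> ((x, hd xs) \<in> D \<and> dwalk D xs)"
  proof (cases xs)
    case Nil then show ?thesis by simp
  next
    case (Cons y ys)
    have a2: "\<forall>i. Suc i < length (x # xs) \<longrightarrow> ((x # xs) ! i, (x # xs) ! Suc i) \<in> D"
      using a unfolding dwalk_def by blast
    have "(x, y) \<in> D" using a2[rule_format, of 0] Cons by simp
    moreover have "dwalk D xs" unfolding dwalk_def
    proof (intro conjI allI impI)
      show "xs \<noteq> []" using Cons by simp
      fix i assume "Suc i < length xs"
      then show "(xs ! i, xs ! Suc i) \<in> D" using a2[rule_format, of "Suc i"] by simp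
    qed
    ultimately show ?thesis using Cons by simp
  qed
next
  assume a: "xs = [] \<or> ((x, hd xs) \<in> D \<and> dwalk D xs)"
  show "dwalk D (x # xs)"
  proof (cases xs)
    case Nil then show ?thesis by (simp add: dwalk_def)
  next
    case (Cons y ys)
    then have h: "(x, y) \<in> D" "dwalk D xs" using a by auto
    show ?thesis unfolding dwalk_def
    proof (intro conjI allI impI)
      fix i assume i: "Suc i < length (x # xs)"
      show "((x # xs) ! i, (x # xs) ! Suc i) \<in> D"
      proof (cases i)
        case 0 then show ?thesis using h Cons by simp
      next
        case (Suc j) then show ?thesis using h(2) i unfolding dwalk_def by simp
      qed
    qed simp
  qed
qed

lemma dwalk_append:
  "dwalk D xs \<Longrightarrow> dwalk D ys \<Longrightarrow> last xs = hd ys \<Longrightarrow> dwalk D (xs @ tl ys)"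
proof (induction xs)
  case Nil then show ?case by (simp add: dwalk_def)
next
  case (Cons x xs)
  show ?case
  proof (cases "xs = []")
    case True
    have yne: "ys \<noteq> []" using Cons.prems(2) unfolding dwalk_def by blast
    have "hd ys = x" using Cons.prems(3) True by simp
    then have e: "x # tl ys = ys" using yne by (metis list.collapse)
    have "(x # xs) @ tl ys = x # tl ys" using True by simp
    then show ?thesis using e Cons.prems(2) by metis
  next
    case False
    have d0: "(x, hd xs) \<in> D \<and> dwalk D xs"
      using dwalk_Cons[THEN iffD1, OF Cons.prems(1)] False by blast
    have l: "last xs = hd ys" using Cons.prems(3) False by simp
    have r: "dwalk D (xs @ tl ys)" using Cons.IH d0 Cons.prems(2) l by blast
    have h: "hd (xs @ tl ys) = hd xs" using False by simp
    have "dwalk D (x # (xs @ tl ys))"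
      by (rule dwalk_Cons[THEN iffD2]) (use d0 r h in simp)
    then show ?thesis by simp
  qed
qed

lemma half_left:
  assumes "is_half_trek m D B t"
  shows "trek_source t = hd (fst (snd t))"
proof -
  obtain b ls rs where t: "t = (b, ls, rs)" by (cases t) auto
  have ne: "ls \<noteq> []" using assms t unfolding is_half_trek_def is_trek_def dwalk_def by auto
  have "card (set ls) = 1" using assms t unfolding is_half_trek_def trek_left_def by simp
  then obtain a where "set ls = {a}" using card_1_singletonE by blast
  then have "hd ls = a" "last ls = a" using ne by (auto dest: hd_in_set last_in_set)
  then show ?thesis using t by (simp add: trek_source_def)
qed

lemma extend_half:
  assumes ht: "is_half_trek m D B t0" and s: "trek_source t0 = v" and tg: "trek_target t0 = x"
    and dw: "dwalk D ls" and h: "hd ls = x" and sub: "set ls \<subseteq> {1..m}"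
  shows "\<exists>t. is_half_trek m D B t \<and> trek_source t = v \<and> trek_target t = last ls"
proof -
  obtain b ls0 rs0 where t0: "t0 = (b, ls0, rs0)" by (cases t0) auto
  have tr: "dwalk D ls0" "dwalk D rs0" "set ls0 \<subseteq> {1..m}" "set rs0 \<subseteq> {1..m}"
    "(if b then (hd ls0, hd rs0) \<in> B else hd ls0 = hd rs0)"
    using ht t0 unfolding is_half_trek_def is_trek_def by auto
  have c: "card (set ls0) = 1" using ht t0 unfolding is_half_trek_def trek_left_def by simp
  have rne: "rs0 \<noteq> []" using tr(2) dwalk_def by auto
  have lne: "ls \<noteq> []" using dw dwalk_def by auto
  have lr: "last rs0 = hd ls" using tg h t0 by (simp add: trek_target_def)
  define t where "t = (b, ls0, rs0 @ tl ls)"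
  have d2: "dwalk D (rs0 @ tl ls)" using dwalk_append[OF tr(2) dw lr] .
  have "set (tl ls) \<subseteq> set ls" using lne by (cases ls) auto
  then have s2: "set (rs0 @ tl ls) \<subseteq> {1..m}" using tr(4) sub by auto
  have hd2: "hd (rs0 @ tl ls) = hd rs0" using rne by simp
  have "is_half_trek m D B t" unfolding t_def is_half_trek_def is_trek_def trek_left_def
    using tr d2 s2 hd2 c by simp
  moreover have "trek_source t = v" using s t0 t_def by (simp add: trek_source_def)
  moreover have "trek_target t = last ls"
  proof (cases "tl ls = []")
    case True
    then have "ls = [hd ls]" using lne by (metis list.collapse)
    then have "last ls = hd ls" by (metis last_ConsL)
    then show ?thesis using True lr t_def by (simp add: trek_target_def)
  next
    case False
    then have "last (tl ls) = last ls" using lne by (metis last_tl)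
    then show ?thesis using False t_def by (simp add: trek_target_def)
  qed
  ultimately show ?thesis by blast
qed

lemma key:
  assumes mg: "mixed_graph m D B" and vm: "v \<in> {1..m}" and tr: "is_trek m D B t"
    and x: "hd (fst (snd t)) \<in> {v} \<union> sib B v \<union> htr m D B v"
  shows "trek_source t \<in> {v} \<union> sib B v \<union> htr m D B v"
proof -
  obtain b ls rs where t: "t = (b, ls, rs)" by (cases t) auto
  have dw: "dwalk D ls" and sub: "set ls \<subseteq> {1..m}" using tr t unfolding is_trek_def by auto
  have lne: "ls \<noteq> []" using dw dwalk_def by auto
  have "\<exists>t0. is_half_trek m D B t0 \<and> trek_source t0 = v \<and> trek_target t0 = hd ls"
  proof -
    have xv: "hd ls \<in> {v} \<union> sib B v \<union> htr m D B v" using x t by simp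
    show ?thesis
    proof (cases "hd ls = v")
      case True
      have "is_half_trek m D B (False, [v], [v])"
        unfolding is_half_trek_def is_trek_def trek_left_def dwalk_def using vm by simp
      then show ?thesis using True by (force simp: trek_source_def trek_target_def)
    next
      case False
      show ?thesis
      proof (cases "hd ls \<in> sib B v")
        case True
        then have "(hd ls, v) \<in> B" by (simp add: sib_def)
        then have b1: "(v, hd ls) \<in> B" using mg unfolding mixed_graph_def sym_def by blast
        have "hd ls \<in> {1..m}" using b1 mg unfolding mixed_graph_def by auto
        then have "is_half_trek m D B (True, [v], [hd ls])"
          unfolding is_half_trek_def is_trek_def trek_left_def dwalk_def using vm b1 by simp
        then show ?thesis by (force simp: trek_source_def trek_target_def)
      next
        case F2: False
        then have "hd ls \<in> htr m D B v" using False xv by auto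
        then show ?thesis unfolding htr_def by auto
      qed
    qed
  qed
  then obtain t0 where "is_half_trek m D B t0" "trek_source t0 = v" "trek_target t0 = hd ls" by blast
  from extend_half[OF this dw refl sub] obtain t1 where
    t1: "is_half_trek m D B t1" "trek_source t1 = v" "trek_target t1 = last ls" by blast
  have "last ls \<in> {1..m}" using sub lne last_in_set by blast
  then have "last ls \<in> {v} \<union> sib B v \<union> htr m D B v" using t1 unfolding htr_def by blast
  then show ?thesis using t by (simp add: trek_source_def)
qed

lemma trek_ls:
  assumes "is_trek m D B t"
  shows "fst (snd t) \<noteq> [] \<and> set (fst (snd t)) \<subseteq> {1..m}"
proof -
  obtain b ls rs where t: "t = (b, ls, rs)" by (cases t) auto
  have "dwalk D ls \<and> set ls \<subseteq> {1..m}" using assms unfolding t is_trek_def by simp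
  then show ?thesis unfolding t dwalk_def by simp
qed

lemma trek_trunc:
  assumes "is_trek m D B t"
  shows "is_half_trek m D B (fst t, [hd (fst (snd t))], snd (snd t))"
proof -
  obtain b ls rs where t: "t = (b, ls, rs)" by (cases t) auto
  have h: "dwalk D rs" "set ls \<subseteq> {1..m}" "set rs \<subseteq> {1..m}" "ls \<noteq> []"
    "(if b then (hd ls, hd rs) \<in> B else hd ls = hd rs)"
    using assms unfolding t is_trek_def dwalk_def by auto
  have "hd ls \<in> {1..m}" using h(2,4) hd_in_set by blast
  moreover have "dwalk D [hd ls]" by (simp add: dwalk_def)
  ultimately show ?thesis using h unfolding t is_half_trek_def is_trek_def trek_left_def by simp
qed

theorem mainTheorem5:
  fixes m :: nat and D B :: "(nat \<times> nat) set" and v :: nat and W :: "nat set"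
  assumes "mixed_graph m D B"
    and "v \<in> {1..m}"
    and "W \<subseteq> {1..m}"
    and "weak_HTC m D B v W"
  shows "\<exists>Y \<subseteq> {1..m}. HTC m D B v Y \<and> Y \<inter> htr m D B v = W \<inter> htr m D B v"
proof -
  note mg = assms(1) and vm = assms(2) and Wm = assms(3)
  obtain T where cW: "card W = card (pa D v)" and dW: "W \<inter> ({v} \<union> sib B v) = {}"
    and Ttr: "\<forall>t\<in>T. is_trek m D B t" and sys: "system_of_treks T W (pa D v)"
    and nsi: "no_sided_intersection T"
    and hh: "\<forall>t\<in>T. trek_source t \<in> htr m D B v \<longrightarrow> is_half_trek m D B t"
    using assms(4) unfolding weak_HTC_def by blast
  define f :: "trek \<Rightarrow> trek" where "f t = (fst t, [hd (fst (snd t))], snd (snd t))" for t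
  define T' where "T' = f ` T"
  define Y where "Y = trek_source ` T'"
  have srcf: "trek_source (f t) = hd (fst (snd t))" for t by (simp add: f_def trek_source_def)
  have tgf: "trek_target (f t) = trek_target t" for t by (simp add: f_def trek_target_def)
  have rf: "trek_right (f t) = trek_right t" for t by (simp add: f_def trek_right_def)
  have lf: "trek_left (f t) = {hd (fst (snd t))}" for t by (simp add: f_def trek_left_def)
  have hd_left: "hd (fst (snd t)) \<in> trek_left t" if "t \<in> T" for t
  proof -
    have "fst (snd t) \<noteq> []" using Ttr that trek_ls by blast
    then show ?thesis by (simp add: trek_left_def)
  qed
  have hd_m: "hd (fst (snd t)) \<in> {1..m}" if "t \<in> T" for t
  proof -
    have "fst (snd t) \<noteq> [] \<and> set (fst (snd t)) \<subseteq> {1..m}" using Ttr that trek_ls by blast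
    then show ?thesis using hd_in_set by blast
  qed
  have injT: "inj_on trek_target T" and imT: "trek_target ` T = pa D v"
    and injS: "inj_on trek_source T" and imS: "trek_source ` T = W"
    using sys unfolding system_of_treks_def by auto
  have neq: "t1 \<noteq> t2 \<Longrightarrow> t1 \<in> T \<Longrightarrow> t2 \<in> T \<Longrightarrow> trek_left t1 \<inter> trek_left t2 = {} \<and> trek_right t1 \<inter> trek_right t2 = {}"
    for t1 t2 using nsi unfolding no_sided_intersection_def by blast
  have injS': "inj_on trek_source T'"
  proof (rule inj_onI)
    fix a b assume ab: "a \<in> T'" "b \<in> T'" "trek_source a = trek_source b"
    obtain t1 where t1: "t1 \<in> T" "a = f t1" using ab(1) unfolding T'_def by blast
    obtain t2 where t2: "t2 \<in> T" "b = f t2" using ab(2) unfolding T'_def by blast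
    have e: "hd (fst (snd t1)) = hd (fst (snd t2))" using ab(3) unfolding t1(2) t2(2) srcf .
    show "a = b"
    proof (rule ccontr)
      assume "a \<noteq> b"
      then have "t1 \<noteq> t2" using t1 t2 by blast
      then have "trek_left t1 \<inter> trek_left t2 = {}" using neq t1 t2 by blast
      moreover have "hd (fst (snd t1)) \<in> trek_left t1 \<inter> trek_left t2"
        using hd_left[OF t1(1)] hd_left[OF t2(1)] e by simp
      ultimately show False by simp
    qed
  qed
  have injT': "inj_on trek_target T'"
  proof (rule inj_onI)
    fix a b assume ab: "a \<in> T'" "b \<in> T'" "trek_target a = trek_target b"
    obtain t1 where t1: "t1 \<in> T" "a = f t1" using ab(1) unfolding T'_def by blast
    obtain t2 where t2: "t2 \<in> T" "b = f t2" using ab(2) unfolding T'_def by blast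
    have "trek_target t1 = trek_target t2" using ab(3) unfolding t1(2) t2(2) tgf .
    then have "t1 = t2" using injT t1(1) t2(1) by (simp add: inj_on_eq_iff)
    then show "a = b" using t1 t2 by simp
  qed
  have imT': "trek_target ` T' = pa D v"
  proof -
    have "trek_target ` T' = (trek_target \<circ> f) ` T" unfolding T'_def by (simp add: image_comp)
    also have "(trek_target \<circ> f) ` T = trek_target ` T" using tgf by (simp add: comp_def)
    finally show ?thesis using imT by simp
  qed
  have sys': "system_of_treks T' Y (pa D v)"
    unfolding system_of_treks_def Y_def using injS' injT' imT' by simp
  have nsi': "no_sided_intersection T'"
    unfolding no_sided_intersection_def T'_def
  proof (intro ballI impI)
    fix a b assume ab: "a \<in> f ` T" "b \<in> f ` T" "a \<noteq> b"
    obtain t1 where t1: "t1 \<in> T" "a = f t1" using ab(1) by blast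
    obtain t2 where t2: "t2 \<in> T" "b = f t2" using ab(2) by blast
    have ne: "t1 \<noteq> t2" using ab(3) unfolding t1(2) t2(2) by metis
    have n: "trek_left t1 \<inter> trek_left t2 = {}" "trek_right t1 \<inter> trek_right t2 = {}"
      using neq[OF ne t1(1) t2(1)] by simp_all
    have s1: "trek_left a \<subseteq> trek_left t1" unfolding t1(2) lf using hd_left[OF t1(1)] by simp
    have s2: "trek_left b \<subseteq> trek_left t2" unfolding t2(2) lf using hd_left[OF t2(1)] by simp
    have "trek_left a \<inter> trek_left b = {}" using n(1) s1 s2 by blast
    moreover have "trek_right a \<inter> trek_right b = {}" using n(2) unfolding t1(2) t2(2) rf .
    ultimately show "trek_left a \<inter> trek_left b = {} \<and> trek_right a \<inter> trek_right b = {}" ..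
  qed
  have half': "\<forall>t\<in>T'. is_half_trek m D B t"
  proof
    fix a assume "a \<in> T'"
    then obtain t where t: "t \<in> T" "a = f t" unfolding T'_def by auto
    have "is_trek m D B t" using Ttr t by blast
    then show "is_half_trek m D B a" using t trek_trunc unfolding f_def by simp
  qed
  have cY: "card Y = card (pa D v)"
    using card_image[OF injS'] card_image[OF injT'] imT' Y_def by simp
  have prp: "(is_half_trek m D B t \<and> hd (fst (snd t)) = trek_source t) \<or>
      (trek_source t \<notin> htr m D B v \<and> hd (fst (snd t)) \<notin> {v} \<union> sib B v \<union> htr m D B v)"
    if tT: "t \<in> T" for t
  proof (cases "is_half_trek m D B t")
    case True then show ?thesis using half_left by simp
  next
    case False
    then have nh: "trek_source t \<notin> htr m D B v" using hh tT by blast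
    have "trek_source t \<in> W" using imS tT by blast
    then have "trek_source t \<notin> {v} \<union> sib B v" using dW by blast
    then have "hd (fst (snd t)) \<notin> {v} \<union> sib B v \<union> htr m D B v"
      using key[OF mg vm] Ttr tT nh by blast
    then show ?thesis using nh by blast
  qed
  have Ym: "Y \<subseteq> {1..m}" unfolding Y_def T'_def using srcf hd_m by auto
  have dY: "Y \<inter> ({v} \<union> sib B v) = {}"
  proof -
    { fix y assume y: "y \<in> Y" "y \<in> {v} \<union> sib B v"
      then obtain t where t: "t \<in> T" "y = hd (fst (snd t))" unfolding Y_def T'_def using srcf by auto
      have "trek_source t \<in> W" using imS t by blast
      then have False using prp[OF t(1)] t y dW by auto }
    then show ?thesis by blast
  qed
  have eq: "Y \<inter> htr m D B v = W \<inter> htr m D B v"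
  proof
    show "Y \<inter> htr m D B v \<subseteq> W \<inter> htr m D B v"
    proof
      fix y assume y: "y \<in> Y \<inter> htr m D B v"
      then obtain t where t: "t \<in> T" "y = hd (fst (snd t))" unfolding Y_def T'_def using srcf by auto
      have "trek_source t \<in> W" using imS t by blast
      then show "y \<in> W \<inter> htr m D B v" using prp[OF t(1)] t y by auto
    qed
  next
    show "W \<inter> htr m D B v \<subseteq> Y \<inter> htr m D B v"
    proof
      fix w assume w: "w \<in> W \<inter> htr m D B v"
      then obtain t where t: "t \<in> T" "w = trek_source t" using imS by auto
      then have "hd (fst (snd t)) = w" using prp[OF t(1)] w by auto
      then have "trek_source (f t) = w" using srcf by simp
      moreover have "f t \<in> T'" unfolding T'_def using t(1) by blast
      ultimately have "w \<in> Y" unfolding Y_def by blast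
      then show "w \<in> Y \<inter> htr m D B v" using w by blast
    qed
  qed
  have "HTC m D B v Y" unfolding HTC_def using cY dY half' sys' nsi' by blast
  then show ?thesis using Ym eq by blast
qed

end
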